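(* Let $\mathcal{G}$ be an effective ample groupoid. The following are equivalent: (1) $(\llbracket\mathcal{G}\rrbracket,\mathcal{G}^{(0)})$ is locally moving, i.e.\ for every non-empty open $A\subseteq\mathcal{G}^{(0)}$ there is $\gamma\in\llbracket\mathcal{G}\rrbracket\setminus\{1\}$ with $\operatorname{supp}(\gamma)\subseteq A$; (2) every non-empty clopen subset of $\mathcal{G}^{(0)}$ contains two distinct points of some single $\mathcal{G}$-orbit.
   Context: Étale groupoid: topological groupoid whose range map $r(g)=gg^{-1}$ is a local homeomorphism, source $s(g)=g^{-1}g$; ample: étale with $\mathcal{G}^{(0)}$ Hausdorff having a basis of compact open sets; effective: interior of $\{g:s(g)=r(g)\}$ equals $\mathcal{G}^{(0)}$. $\mathcal{G}$-orbit of $x$: $\{r(g):s(g)=x\}$. A full bisection is an open $U$ with $s,r$ injective on $U$ and $s(U)=r(U)=\mathcal{G}^{(0)}$; $\pi_U=r|_U\circ(s|_U)^{-1}$. $\operatorname{supp}(\phi)$ is the closure of the set of points moved by $\phi$. $\llbracket\mathcal{G}\rrbracket$ is the group of all $\pi_U$ for full bisections $U$ with $\operatorname{supp}(\pi_U)$ compact. *)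

theory Defs
  imports "HOL-Analysis.Analysis"
begin

text \<open>A topological groupoid is given by a topology T on the type of arrows
(arrow set = topspace T), a unit space G0, a multiplication m (meaningful on
composable pairs) and an inversion i.\<close>

definition gsrc :: "('g \<Rightarrow> 'g \<Rightarrow> 'g) \<Rightarrow> ('g \<Rightarrow> 'g) \<Rightarrow> 'g \<Rightarrow> 'g" where
  "gsrc m i g = m (i g) g"

definition grng :: "('g \<Rightarrow> 'g \<Rightarrow> 'g) \<Rightarrow> ('g \<Rightarrow> 'g) \<Rightarrow> 'g \<Rightarrow> 'g" where
  "grng m i g = m g (i g)"

definition groupoid :: "'g set \<Rightarrow> 'g set \<Rightarrow> ('g \<Rightarrow> 'g \<Rightarrow> 'g) \<Rightarrow> ('g \<Rightarrow> 'g) \<Rightarrow> bool" where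
  "groupoid G G0 m i \<longleftrightarrow>
     G0 \<subseteq> G \<and>
     (\<forall>g\<in>G. i g \<in> G \<and> i (i g) = g) \<and>
     (\<forall>g\<in>G. gsrc m i g \<in> G0 \<and> grng m i g \<in> G0) \<and>
     (\<forall>x\<in>G0. gsrc m i x = x \<and> grng m i x = x) \<and>
     (\<forall>g\<in>G. m g (gsrc m i g) = g \<and> m (grng m i g) g = g) \<and>
     (\<forall>g\<in>G. \<forall>h\<in>G. gsrc m i g = grng m i h \<longrightarrow>
        m g h \<in> G \<and> gsrc m i (m g h) = gsrc m i h \<and> grng m i (m g h) = grng m i g) \<and>
     (\<forall>g\<in>G. \<forall>h\<in>G. \<forall>k\<in>G. gsrc m i g = grng m i h \<and> gsrc m i h = grng m i k \<longrightarrow>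
        m (m g h) k = m g (m h k))"

definition composable_pairs :: "'g set \<Rightarrow> ('g \<Rightarrow> 'g \<Rightarrow> 'g) \<Rightarrow> ('g \<Rightarrow> 'g) \<Rightarrow> ('g \<times> 'g) set" where
  "composable_pairs G m i = {(g, h). g \<in> G \<and> h \<in> G \<and> gsrc m i g = grng m i h}"

definition topological_groupoid :: "'g topology \<Rightarrow> 'g set \<Rightarrow> ('g \<Rightarrow> 'g \<Rightarrow> 'g) \<Rightarrow> ('g \<Rightarrow> 'g) \<Rightarrow> bool" where
  "topological_groupoid T G0 m i \<longleftrightarrow>
     groupoid (topspace T) G0 m i \<and>
     continuous_map T T i \<and>
     continuous_map (subtopology (prod_topology T T) (composable_pairs (topspace T) m i)) T
        (\<lambda>(g, h). m g h)"

definition local_homeomorphism_map :: "'a topology \<Rightarrow> 'b topology \<Rightarrow> ('a \<Rightarrow> 'b) \<Rightarrow> bool" where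
  "local_homeomorphism_map X Y f \<longleftrightarrow>
     continuous_map X Y f \<and>
     (\<forall>x\<in>topspace X. \<exists>U. openin X U \<and> x \<in> U \<and> openin Y (f ` U) \<and>
        homeomorphic_map (subtopology X U) (subtopology Y (f ` U)) f)"

definition etale_groupoid :: "'g topology \<Rightarrow> 'g set \<Rightarrow> ('g \<Rightarrow> 'g \<Rightarrow> 'g) \<Rightarrow> ('g \<Rightarrow> 'g) \<Rightarrow> bool" where
  "etale_groupoid T G0 m i \<longleftrightarrow>
     topological_groupoid T G0 m i \<and>
     local_homeomorphism_map T (subtopology T G0) (grng m i)"

definition ample_groupoid :: "'g topology \<Rightarrow> 'g set \<Rightarrow> ('g \<Rightarrow> 'g \<Rightarrow> 'g) \<Rightarrow> ('g \<Rightarrow> 'g) \<Rightarrow> bool" where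
  "ample_groupoid T G0 m i \<longleftrightarrow>
     etale_groupoid T G0 m i \<and>
     Hausdorff_space (subtopology T G0) \<and>
     (\<forall>W x. openin (subtopology T G0) W \<and> x \<in> W \<longrightarrow>
        (\<exists>K. openin (subtopology T G0) K \<and> compactin (subtopology T G0) K \<and> x \<in> K \<and> K \<subseteq> W))"

definition effective_groupoid :: "'g topology \<Rightarrow> 'g set \<Rightarrow> ('g \<Rightarrow> 'g \<Rightarrow> 'g) \<Rightarrow> ('g \<Rightarrow> 'g) \<Rightarrow> bool" where
  "effective_groupoid T G0 m i \<longleftrightarrow>
     T interior_of {g \<in> topspace T. gsrc m i g = grng m i g} = G0"

definition gorbit :: "'g topology \<Rightarrow> ('g \<Rightarrow> 'g \<Rightarrow> 'g) \<Rightarrow> ('g \<Rightarrow> 'g) \<Rightarrow> 'g \<Rightarrow> 'g set" where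
  "gorbit T m i x = {grng m i g | g. g \<in> topspace T \<and> gsrc m i g = x}"

definition full_bisection :: "'g topology \<Rightarrow> 'g set \<Rightarrow> ('g \<Rightarrow> 'g \<Rightarrow> 'g) \<Rightarrow> ('g \<Rightarrow> 'g) \<Rightarrow> 'g set \<Rightarrow> bool" where
  "full_bisection T G0 m i U \<longleftrightarrow>
     openin T U \<and> inj_on (gsrc m i) U \<and> inj_on (grng m i) U \<and>
     gsrc m i ` U = G0 \<and> grng m i ` U = G0"

text \<open>pi_U = r|_U o (s|_U)^-1 on G0; extended by the identity outside G0 so that
the identity homeomorphism of G0 is represented by id.\<close>
definition bisection_map :: "('g \<Rightarrow> 'g \<Rightarrow> 'g) \<Rightarrow> ('g \<Rightarrow> 'g) \<Rightarrow> 'g set \<Rightarrow> 'g set \<Rightarrow> 'g \<Rightarrow> 'g" where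
  "bisection_map m i G0 U x = (if x \<in> G0 then grng m i (inv_into U (gsrc m i) x) else x)"

definition supp_map :: "'a topology \<Rightarrow> ('a \<Rightarrow> 'a) \<Rightarrow> 'a set" where
  "supp_map X \<phi> = X closure_of {x \<in> topspace X. \<phi> x \<noteq> x}"

definition topological_full_group :: "'g topology \<Rightarrow> 'g set \<Rightarrow> ('g \<Rightarrow> 'g \<Rightarrow> 'g) \<Rightarrow> ('g \<Rightarrow> 'g) \<Rightarrow> ('g \<Rightarrow> 'g) set" where
  "topological_full_group T G0 m i =
     {bisection_map m i G0 U | U. full_bisection T G0 m i U \<and>
        compactin (subtopology T G0) (supp_map (subtopology T G0) (bisection_map m i G0 U))}"

definition locally_moving :: "'a topology \<Rightarrow> ('a \<Rightarrow> 'a) set \<Rightarrow> bool" where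
  "locally_moving X \<Gamma> \<longleftrightarrow>
     (\<forall>A. openin X A \<and> A \<noteq> {} \<longrightarrow> (\<exists>\<gamma>\<in>\<Gamma>. \<gamma> \<noteq> id \<and> supp_map X \<gamma> \<subseteq> A))"

end

theory Submission
  imports Defs
begin

locale AG =
  fixes T :: "'g topology" and G0 :: "'g set" and m :: "'g \<Rightarrow> 'g \<Rightarrow> 'g" and i :: "'g \<Rightarrow> 'g"
  assumes amp: "ample_groupoid T G0 m i" and eff: "effective_groupoid T G0 m i"
begin

abbreviation "X \<equiv> subtopology T G0"
abbreviation "src \<equiv> gsrc m i"
abbreviation "rng \<equiv> grng m i"

lemma grp: "groupoid (topspace T) G0 m i"
  using amp unfolding ample_groupoid_def etale_groupoid_def topological_groupoid_def by blast

lemma G0G: "G0 \<subseteq> topspace T" using grp unfolding groupoid_def by blast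
lemma topX: "topspace X = G0" using G0G by auto
lemma inv_G: "g \<in> topspace T \<Longrightarrow> i g \<in> topspace T" using grp unfolding groupoid_def by blast
lemma inv_inv: "g \<in> topspace T \<Longrightarrow> i (i g) = g" using grp unfolding groupoid_def by blast
lemma src_G0: "g \<in> topspace T \<Longrightarrow> src g \<in> G0" using grp unfolding groupoid_def by blast
lemma rng_G0: "g \<in> topspace T \<Longrightarrow> rng g \<in> G0" using grp unfolding groupoid_def by blast
lemma unit_src: "x \<in> G0 \<Longrightarrow> src x = x" using grp unfolding groupoid_def by blast
lemma unit_rng: "x \<in> G0 \<Longrightarrow> rng x = x" using grp unfolding groupoid_def by blast
lemma src_inv: "g \<in> topspace T \<Longrightarrow> src (i g) = rng g"
  by (simp add: gsrc_def grng_def inv_inv)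
lemma rng_inv: "g \<in> topspace T \<Longrightarrow> rng (i g) = src g"
  by (simp add: gsrc_def grng_def inv_inv)

lemma G0_open: "openin T G0"
  using eff unfolding effective_groupoid_def by (metis openin_interior_of)

lemma openX: "openin X W \<longleftrightarrow> openin T W \<and> W \<subseteq> G0"
  by (rule openin_open_subtopology[OF G0_open])

lemma cont_i: "continuous_map T T i"
  using amp unfolding ample_groupoid_def etale_groupoid_def topological_groupoid_def by blast

lemma cont_r: "continuous_map T X rng"
  using amp unfolding ample_groupoid_def etale_groupoid_def local_homeomorphism_map_def by blast

lemma cont_s: "continuous_map T X src"
proof (rule continuous_map_eq[OF continuous_map_compose[OF cont_i cont_r]])
  fix x assume "x \<in> topspace T" then show "(rng \<circ> i) x = src x" by (simp add: rng_inv)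
qed

lemma haus: "Hausdorff_space X"
  using amp unfolding ample_groupoid_def by blast

lemma ample_basis: "openin X W \<Longrightarrow> x \<in> W \<Longrightarrow> \<exists>K. openin X K \<and> compactin X K \<and> x \<in> K \<and> K \<subseteq> W"
  using amp unfolding ample_groupoid_def by blast

lemma loc_r: "g \<in> topspace T \<Longrightarrow> \<exists>U. openin T U \<and> g \<in> U \<and> openin X (rng ` U) \<and>
   homeomorphic_map (subtopology T U) (subtopology X (rng ` U)) rng"
  using amp unfolding ample_groupoid_def etale_groupoid_def local_homeomorphism_map_def by blast

lemma hom_i: "homeomorphic_map T T i"
  unfolding homeomorphic_map_maps homeomorphic_maps_def
  using cont_i inv_inv by blast

lemma loc_s: assumes g: "g \<in> topspace T"
  shows "\<exists>U. openin T U \<and> g \<in> U \<and> openin X (src ` U) \<and>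
   homeomorphic_map (subtopology T U) (subtopology X (src ` U)) src"
proof -
  obtain V where V: "openin T V" "i g \<in> V" "openin X (rng ` V)"
    "homeomorphic_map (subtopology T V) (subtopology X (rng ` V)) rng"
    using loc_r[OF inv_G[OF g]] by blast
  define U where "U = {h \<in> topspace T. i h \<in> V}"
  have oU: "openin T U" unfolding U_def by (rule openin_continuous_map_preimage[OF cont_i V(1)])
  have gU: "g \<in> U" using g V(2) U_def by blast
  have VG: "V \<subseteq> topspace T" using V(1) openin_subset by blast
  have iU: "i ` U = V"
  proof
    show "i ` U \<subseteq> V" unfolding U_def by blast
    show "V \<subseteq> i ` U"
    proof
      fix v assume v: "v \<in> V"
      then have "v \<in> topspace T" using VG by blast
      then have "i v \<in> U" "i (i v) = v" using inv_G inv_inv v unfolding U_def by auto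
      then show "v \<in> i ` U" by (metis image_eqI)
    qed
  qed
  have UG: "U \<subseteq> topspace T" unfolding U_def by blast
  have sU: "src ` U = rng ` V"
  proof -
    have "src ` U = rng ` (i ` U)" unfolding image_image
      by (rule image_cong) (use UG rng_inv in auto)
    then show ?thesis using iU by simp
  qed
  have h1: "homeomorphic_map (subtopology T U) (subtopology T V) i"
    apply (rule homeomorphic_map_subtopologies[OF hom_i])
    using iU UG VG by (simp add: Int_absorb1)
  have h2: "homeomorphic_map (subtopology T U) (subtopology X (src ` U)) (rng \<circ> i)"
    using homeomorphic_map_compose[OF h1 V(4)] sU by simp
  have h3: "homeomorphic_map (subtopology T U) (subtopology X (src ` U)) src"
    apply (rule homeomorphic_map_eq[OF h2])
    using UG by (simp add: rng_inv)
  show ?thesis using oU gU sU V(3) h3 by auto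
qed

lemma hom_open_image:
  assumes "homeomorphic_map (subtopology T U) (subtopology X (f ` U)) f" "openin X (f ` U)"
    "openin T W" "W \<subseteq> U"
  shows "openin X (f ` W)"
proof -
  have "W = W \<inter> U" using assms(4) by blast
  then have "openin (subtopology T U) W" using assms(3) unfolding openin_subtopology by blast
  then have "openin (subtopology X (f ` U)) (f ` W)"
    using assms(1) homeomorphic_imp_open_map open_map_def by blast
  then show ?thesis using assms(2) openin_trans_full by blast
qed

end


lemma inj_glue:
  assumes DE: "D \<inter> E = {}"
    and cl: "\<And>w. w \<in> V \<Longrightarrow> (w \<in> B \<and> f w \<in> D) \<or> (w \<in> C \<and> f w \<in> E) \<or> (f w = w \<and> w \<notin> D \<and> w \<notin> E)"
    and iB: "inj_on f B" and iC: "inj_on f C"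
  shows "inj_on f V"
proof (rule inj_onI)
  fix u v assume u: "u \<in> V" and v: "v \<in> V" and e: "f u = f v"
  show "u = v"
  proof (cases "f u \<in> D")
    case True
    then have "u \<in> B" "v \<in> B" using cl[OF u] cl[OF v] e DE by auto
    then show ?thesis using iB e by (simp add: inj_on_eq_iff)
  next
    case F1: False
    show ?thesis
    proof (cases "f u \<in> E")
      case True
      then have "u \<in> C" "v \<in> C" using cl[OF u] cl[OF v] e DE by auto
      then show ?thesis using iC e by (simp add: inj_on_eq_iff)
    next
      case False
      then have "f u = u" "f v = v" using cl[OF u] cl[OF v] e F1 by auto
      then show ?thesis using e by metis
    qed
  qed
qed

context AG begin


lemma dir1:
  assumes LM: "locally_moving X (topological_full_group T G0 m i)"
    and C: "closedin X C" "openin X C" "C \<noteq> {}"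
  shows "\<exists>x\<in>C. \<exists>y\<in>C. x \<noteq> y \<and> y \<in> gorbit T m i x"
proof -
  obtain \<gamma> where \<gamma>: "\<gamma> \<in> topological_full_group T G0 m i" "\<gamma> \<noteq> id" "supp_map X \<gamma> \<subseteq> C"
    using LM C unfolding locally_moving_def by blast
  then obtain U where U: "\<gamma> = bisection_map m i G0 U" "full_bisection T G0 m i U"
    unfolding topological_full_group_def by blast
  have UG: "U \<subseteq> topspace T" using U(2) openin_subset unfolding full_bisection_def by blast
  have sU: "src ` U = G0" and injr: "inj_on rng U" using U(2) unfolding full_bisection_def by blast+
  obtain x where x: "\<gamma> x \<noteq> x" using \<gamma>(2) by (metis eq_id_iff)
  have xG0: "x \<in> G0" using x U(1) unfolding bisection_map_def by (cases "x \<in> G0") auto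
  define g where "g = inv_into U src x"
  have gU: "g \<in> U" unfolding g_def using xG0 sU by (metis inv_into_into)
  have sg: "src g = x" unfolding g_def using xG0 sU by (metis f_inv_into_f)
  have gx: "\<gamma> x = rng g" unfolding U(1) bisection_map_def g_def using xG0 by simp
  define y where "y = rng g"
  have gG: "g \<in> topspace T" using gU UG by blast
  have yG0: "y \<in> G0" unfolding y_def using gG rng_G0 by blast
  have yx: "y \<noteq> x" using x gx y_def by simp
  have gy: "\<gamma> y \<noteq> y"
  proof
    assume eq: "\<gamma> y = y"
    define h where "h = inv_into U src y"
    have hU: "h \<in> U" unfolding h_def using yG0 sU by (metis inv_into_into)
    have sh: "src h = y" unfolding h_def using yG0 sU by (metis f_inv_into_f)
    have "\<gamma> y = rng h" unfolding U(1) bisection_map_def h_def using yG0 by simp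
    then have "rng h = rng g" using eq y_def by simp
    then have "h = g" using injr hU gU inj_on_def by metis
    then show False using sh sg yx by simp
  qed
  have sub: "{z \<in> topspace X. \<gamma> z \<noteq> z} \<subseteq> supp_map X \<gamma>"
    unfolding supp_map_def by (rule closure_of_subset) blast
  have "x \<in> {z \<in> topspace X. \<gamma> z \<noteq> z}" using x xG0 topX by simp
  then have xC: "x \<in> C" using sub \<gamma>(3) by (meson subsetD)
  have "y \<in> {z \<in> topspace X. \<gamma> z \<noteq> z}" using gy yG0 topX by simp
  then have yC: "y \<in> C" using sub \<gamma>(3) by (meson subsetD)
  have yo: "y \<in> gorbit T m i x" unfolding gorbit_def y_def using gG sg by blast
  show ?thesis using xC yC yo yx by metis
qed



lemma dir2:
  assumes H: "\<forall>C. closedin X C \<and> openin X C \<and> C \<noteq> {} \<longrightarrow>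
       (\<exists>x\<in>C. \<exists>y\<in>C. x \<noteq> y \<and> y \<in> gorbit T m i x)"
  shows "locally_moving X (topological_full_group T G0 m i)"
  unfolding locally_moving_def
proof (intro allI impI)
  fix A assume A: "openin X A \<and> A \<noteq> {}"
  then obtain a where a: "a \<in> A" by blast
  obtain K where K: "openin X K" "compactin X K" "a \<in> K" "K \<subseteq> A"
    using ample_basis A a by blast
  have Kc: "closedin X K" using compactin_imp_closedin[OF haus K(2)] .
  have KG0: "K \<subseteq> G0" using K(1) openin_subset topX by metis
  obtain x y where xy: "x \<in> K" "y \<in> K" "x \<noteq> y" "y \<in> gorbit T m i x"
    using H K Kc by blast
  obtain g where g: "g \<in> topspace T" "src g = x" "rng g = y"
    using xy(4) unfolding gorbit_def by blast
  have xG: "x \<in> topspace X" "y \<in> topspace X" using xy KG0 topX by auto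
  obtain Ox Oy where O: "openin X Ox" "openin X Oy" "x \<in> Ox" "y \<in> Oy" "disjnt Ox Oy"
    using haus xG xy(3) unfolding Hausdorff_space_def by blast
  obtain Ur where Ur: "openin T Ur" "g \<in> Ur" "openin X (rng ` Ur)"
    "homeomorphic_map (subtopology T Ur) (subtopology X (rng ` Ur)) rng"
    using loc_r[OF g(1)] by blast
  obtain Us where Us: "openin T Us" "g \<in> Us" "openin X (src ` Us)"
    "homeomorphic_map (subtopology T Us) (subtopology X (src ` Us)) src"
    using loc_s[OF g(1)] by blast
  define W where "W = Ur \<inter> Us \<inter> {h \<in> topspace T. src h \<in> Ox \<inter> K} \<inter> {h \<in> topspace T. rng h \<in> Oy \<inter> K}"
  have oW: "openin T W" unfolding W_def
    by (intro openin_Int Ur(1) Us(1) openin_continuous_map_preimage[OF cont_s]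
        openin_continuous_map_preimage[OF cont_r] O K)
  have gW: "g \<in> W" unfolding W_def using g O xy Ur Us by simp
  have WUr: "W \<subseteq> Ur" and WUs: "W \<subseteq> Us" and WG: "W \<subseteq> topspace T" unfolding W_def by blast+
  have sWo: "openin X (src ` W)" using hom_open_image[OF Us(4) Us(3) oW WUs] .
  have "x \<in> src ` W" using gW g(2) by blast
  then obtain D where D: "openin X D" "compactin X D" "x \<in> D" "D \<subseteq> src ` W"
    using ample_basis sWo by blast
  define B where "B = {h \<in> W. src h \<in> D}"
  have Beq: "B = W \<inter> {h \<in> topspace T. src h \<in> D}" unfolding B_def using WG by blast
  have oB: "openin T B" unfolding Beq by (intro openin_Int oW openin_continuous_map_preimage[OF cont_s] D(1))
  have BW: "B \<subseteq> W" unfolding B_def by blast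
  have BG: "B \<subseteq> topspace T" using BW WG by blast
  have sB: "src ` B = D" unfolding B_def using D(4) by blast
  define E where "E = rng ` B"
  have oE: "openin X E" unfolding E_def using hom_open_image[OF Ur(4) Ur(3) oB] BW WUr by blast
  have "compactin (subtopology X (src ` Us)) (src ` B)"
  proof -
    have "D \<subseteq> src ` Us" using D(4) WUs by blast
    then show ?thesis unfolding sB using compactin_subtopology[of X "src ` Us" D] D(2) by blast
  qed
  then have "compactin (subtopology T Us) B"
    using homeomorphic_map_compactness[OF Us(4), of B] BW WUs BG by auto
  then have cB: "compactin T B" by (simp add: compactin_subtopology)
  have cE: "compactin X E" unfolding E_def by (rule image_compactin[OF cB cont_r])
  have DOx: "D \<subseteq> Ox \<inter> K" using D(4) unfolding W_def by blast
  have EOy: "E \<subseteq> Oy \<inter> K" unfolding E_def B_def W_def by blast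
  have DE: "D \<inter> E = {}" using DOx EOy O(5) unfolding disjnt_def by blast
  have Dc: "closedin X D" using compactin_imp_closedin[OF haus D(2)] .
  have Ec: "closedin X E" using compactin_imp_closedin[OF haus cE] .
  define R where "R = G0 - (D \<union> E)"
  have oRX: "openin X R" unfolding R_def
    using openin_diff[OF openin_topspace[of X] closedin_Un[OF Dc Ec]] topX by simp
  have oR: "openin T R" using oRX openX by blast
  have RG0: "R \<subseteq> G0" unfolding R_def by blast
  have iBeq: "i ` B = {h \<in> topspace T. i h \<in> B}"
  proof
    show "i ` B \<subseteq> {h \<in> topspace T. i h \<in> B}" using BG inv_G inv_inv by auto
    show "{h \<in> topspace T. i h \<in> B} \<subseteq> i ` B"
    proof
      fix h assume "h \<in> {h \<in> topspace T. i h \<in> B}"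
      then have "h \<in> topspace T" "i h \<in> B" by auto
      then show "h \<in> i ` B" using inv_inv by (metis image_eqI)
    qed
  qed
  have oiB: "openin T (i ` B)" unfolding iBeq by (rule openin_continuous_map_preimage[OF cont_i oB])
  define V where "V = B \<union> i ` B \<union> R"
  have oV: "openin T V" unfolding V_def using oB oiB oR by blast
  have injsB: "inj_on src B"
    using homeomorphic_imp_injective_map[OF Us(4)] BW WUs BG by (auto intro: inj_on_subset)
  have injrB: "inj_on rng B"
    using homeomorphic_imp_injective_map[OF Ur(4)] BW WUr BG by (auto intro: inj_on_subset)
  have fB: "\<And>b. b \<in> B \<Longrightarrow> b \<in> topspace T \<and> src b \<in> D \<and> rng b \<in> E"
    unfolding E_def using BG B_def by blast
  have fiB: "\<And>c. c \<in> i ` B \<Longrightarrow> \<exists>b\<in>B. c = i b \<and> src c = rng b \<and> rng c = src b \<and> src c \<in> E \<and> rng c \<in> D"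
  proof -
    fix c assume "c \<in> i ` B"
    then obtain b where b: "b \<in> B" "c = i b" by blast
    have fb: "b \<in> topspace T" "src b \<in> D" "rng b \<in> E" using fB[OF b(1)] by auto
    have "src c = rng b" "rng c = src b" using b(2) fb(1) src_inv rng_inv by auto
    then show "\<exists>b\<in>B. c = i b \<and> src c = rng b \<and> rng c = src b \<and> src c \<in> E \<and> rng c \<in> D"
      using b fb by metis
  qed
  have fR: "\<And>z. z \<in> R \<Longrightarrow> src z = z \<and> rng z = z \<and> z \<in> G0 \<and> z \<notin> D \<and> z \<notin> E"
    unfolding R_def using unit_src unit_rng by blast
  have Vcases: "\<And>v. v \<in> V \<Longrightarrow> v \<in> B \<or> v \<in> i ` B \<or> v \<in> R" unfolding V_def by blast
  have injs: "inj_on src V"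
  proof (rule inj_glue[of D E])
    show "D \<inter> E = {}" using DE by blast
    show "inj_on src B" by (rule injsB)
    have "inj_on (src \<circ> i) B"
      using injrB by (rule inj_on_cong[THEN iffD1, rotated]) (use BG src_inv in auto)
    then show "inj_on src (i ` B)" by (rule inj_on_imageI)
    fix w assume w: "w \<in> V"
    show "(w \<in> B \<and> src w \<in> D) \<or> (w \<in> i ` B \<and> src w \<in> E) \<or> (src w = w \<and> w \<notin> D \<and> w \<notin> E)"
    proof (cases "w \<in> B")
      case True then show ?thesis using fB by blast
    next
      case False
      show ?thesis
      proof (cases "w \<in> i ` B")
        case True then have "src w \<in> E" using fiB[of w] by metis
        then show ?thesis using True by blast
      next
        case F2: False
        then have "w \<in> R" using Vcases[OF w] False by blast
        then show ?thesis using fR by blast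
      qed
    qed
  qed
  have injr: "inj_on rng V"
  proof (rule inj_glue[of E D])
    show "E \<inter> D = {}" using DE by blast
    show "inj_on rng B" by (rule injrB)
    have "inj_on (rng \<circ> i) B"
      using injsB by (rule inj_on_cong[THEN iffD1, rotated]) (use BG rng_inv in auto)
    then show "inj_on rng (i ` B)" by (rule inj_on_imageI)
    fix w assume w: "w \<in> V"
    show "(w \<in> B \<and> rng w \<in> E) \<or> (w \<in> i ` B \<and> rng w \<in> D) \<or> (rng w = w \<and> w \<notin> E \<and> w \<notin> D)"
    proof (cases "w \<in> B")
      case True then show ?thesis using fB by blast
    next
      case False
      show ?thesis
      proof (cases "w \<in> i ` B")
        case True then have "rng w \<in> D" using fiB[of w] by metis
        then show ?thesis using True by blast
      next
        case F2: False
        then have "w \<in> R" using Vcases[OF w] False by blast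
        then show ?thesis using fR by blast
      qed
    qed
  qed
  have VG: "V \<subseteq> topspace T" using oV openin_subset by blast
  have DG0: "D \<subseteq> G0" and EG0: "E \<subseteq> G0" using D(1) oE openin_subset topX by metis+
  have sV: "src ` V = G0"
  proof
    show "src ` V \<subseteq> G0" using VG src_G0 by blast
    show "G0 \<subseteq> src ` V"
    proof
      fix z assume z: "z \<in> G0"
      show "z \<in> src ` V"
      proof (cases "z \<in> D")
        case True then obtain b where "b \<in> B" "src b = z" using sB by blast
        then show ?thesis unfolding V_def by blast
      next
        case False
        show ?thesis
        proof (cases "z \<in> E")
          case True then obtain b where b: "b \<in> B" "rng b = z" unfolding E_def by blast
          then have "src (i b) = z" using BG src_inv by blast
          moreover have "i b \<in> V" unfolding V_def using b by blast
          ultimately show ?thesis by blast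
        next
          case F2: False
          then have "z \<in> R" unfolding R_def using z False by blast
          then show ?thesis unfolding V_def using fR by (metis UnI2 image_eqI)
        qed
      qed
    qed
  qed
  have rV: "rng ` V = G0"
  proof
    show "rng ` V \<subseteq> G0" using VG rng_G0 by blast
    show "G0 \<subseteq> rng ` V"
    proof
      fix z assume z: "z \<in> G0"
      show "z \<in> rng ` V"
      proof (cases "z \<in> E")
        case True then obtain b where "b \<in> B" "rng b = z" unfolding E_def by blast
        then show ?thesis unfolding V_def by blast
      next
        case False
        show ?thesis
        proof (cases "z \<in> D")
          case True then obtain b where b: "b \<in> B" "src b = z" using sB by blast
          then have "rng (i b) = z" using BG rng_inv by blast
          moreover have "i b \<in> V" unfolding V_def using b by blast
          ultimately show ?thesis by blast
        next
          case F2: False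
          then have "z \<in> R" unfolding R_def using z False by blast
          then show ?thesis unfolding V_def using fR by (metis UnI2 image_eqI)
        qed
      qed
    qed
  qed
  have fbV: "full_bisection T G0 m i V"
    unfolding full_bisection_def using oV injs injr sV rV by blast
  define \<gamma> where "\<gamma> = bisection_map m i G0 V"
  have pre: "\<And>z. z \<in> G0 \<Longrightarrow> inv_into V src z \<in> V \<and> src (inv_into V src z) = z \<and> \<gamma> z = rng (inv_into V src z)"
    unfolding \<gamma>_def bisection_map_def using sV by (metis inv_into_into f_inv_into_f)
  have xD: "x \<in> G0" using D(3) DG0 by blast
  have gx: "\<gamma> x \<noteq> x"
  proof -
    define u where "u = inv_into V src x"
    have u: "u \<in> V" "src u = x" "\<gamma> x = rng u" using pre[OF xD] u_def by auto
    have n1: "u \<notin> i ` B"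
    proof
      assume "u \<in> i ` B" then have "src u \<in> E" using fiB[of u] by metis
      then show False using u(2) D(3) DE by blast
    qed
    have n2: "u \<notin> R"
    proof
      assume "u \<in> R" then have "src u = u" "u \<notin> D" using fR by auto
      then show False using u(2) D(3) by metis
    qed
    have "u \<in> B" using Vcases[OF u(1)] n1 n2 by blast
    then have "rng u \<in> E" using fB by blast
    then show ?thesis using u(3) D(3) DE by (metis disjoint_iff)
  qed
  have mov: "{z \<in> topspace X. \<gamma> z \<noteq> z} \<subseteq> D \<union> E"
  proof
    fix z assume "z \<in> {z \<in> topspace X. \<gamma> z \<noteq> z}"
    then have z: "z \<in> G0" "\<gamma> z \<noteq> z" using topX by auto
    show "z \<in> D \<union> E"
    proof (rule ccontr)
      assume nz: "z \<notin> D \<union> E"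
      define u where "u = inv_into V src z"
      have u: "u \<in> V" "src u = z" "\<gamma> z = rng u" using pre[OF z(1)] u_def by auto
      have n1: "u \<notin> i ` B"
      proof
        assume "u \<in> i ` B" then have "src u \<in> E" using fiB[of u] by metis
        then show False using u(2) nz by blast
      qed
      have n0: "u \<notin> B"
      proof
        assume "u \<in> B" then have "src u \<in> D" using fB by blast
        then show False using u(2) nz by blast
      qed
      have "u \<in> R" using Vcases[OF u(1)] n1 n0 by blast
      then have "\<gamma> z = z" using fR u by metis
      then show False using z by blast
    qed
  qed
  have DEc: "closedin X (D \<union> E)" using Dc Ec by blast
  have supp: "supp_map X \<gamma> \<subseteq> D \<union> E"
    unfolding supp_map_def by (rule closure_of_minimal[OF mov DEc])
  have cs: "compactin X (supp_map X \<gamma>)"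
    by (rule closed_compactin[OF compactin_Un[OF D(2) cE] supp]) (simp add: supp_map_def)
  have "\<gamma> \<in> topological_full_group T G0 m i"
    unfolding topological_full_group_def using fbV cs \<gamma>_def by blast
  moreover have "\<gamma> \<noteq> id" using gx by (metis id_apply)
  moreover have "supp_map X \<gamma> \<subseteq> A" using supp DOx EOy K(4) by blast
  ultimately show "\<exists>\<gamma>\<in>topological_full_group T G0 m i. \<gamma> \<noteq> id \<and> supp_map X \<gamma> \<subseteq> A" by blast
qed

end

theorem proposition7p7:
  fixes T :: "'g topology" and G0 :: "'g set"
    and m :: "'g \<Rightarrow> 'g \<Rightarrow> 'g" and i :: "'g \<Rightarrow> 'g"
  assumes "ample_groupoid T G0 m i" and "effective_groupoid T G0 m i"
  shows "locally_moving (subtopology T G0) (topological_full_group T G0 m i) \<longleftrightarrow>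
    (\<forall>C. closedin (subtopology T G0) C \<and> openin (subtopology T G0) C \<and> C \<noteq> {} \<longrightarrow>
       (\<exists>x\<in>C. \<exists>y\<in>C. x \<noteq> y \<and> y \<in> gorbit T m i x))"
proof -
  interpret AG T G0 m i using assms by unfold_locales
  show ?thesis
  proof
    assume L: "locally_moving (subtopology T G0) (topological_full_group T G0 m i)"
    show "\<forall>C. closedin (subtopology T G0) C \<and> openin (subtopology T G0) C \<and> C \<noteq> {} \<longrightarrow>
       (\<exists>x\<in>C. \<exists>y\<in>C. x \<noteq> y \<and> y \<in> gorbit T m i x)"
    proof (intro allI impI)
      fix C assume "closedin (subtopology T G0) C \<and> openin (subtopology T G0) C \<and> C \<noteq> {}"
      then have "closedin (subtopology T G0) C" "openin (subtopology T G0) C" "C \<noteq> {}"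
        by (rule conjunct1, rule conjunct1[OF conjunct2], rule conjunct2[OF conjunct2])
      then show "\<exists>x\<in>C. \<exists>y\<in>C. x \<noteq> y \<and> y \<in> gorbit T m i x" by (rule dir1[OF L])
    qed
  next
    assume "\<forall>C. closedin (subtopology T G0) C \<and> openin (subtopology T G0) C \<and> C \<noteq> {} \<longrightarrow>
       (\<exists>x\<in>C. \<exists>y\<in>C. x \<noteq> y \<and> y \<in> gorbit T m i x)"
    then show "locally_moving (subtopology T G0) (topological_full_group T G0 m i)" by (rule dir2)
  qed
qed

end
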